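(* Let $\Omega\subset\mathbb{R}^n$ be open, $\omega\in A_\infty$, and let $p:\Omega\to[1,\infty]$ be measurable such that $\frac1p$ satisfies the log-Hölder decay condition with limit exponent $p_\infty\in[1,\infty]$. Then there exists $\lambda\in(0,1)$ such that \[\int_\Omega\lambda^{1/\left|\frac1{p(x)}-\frac1{p_\infty}\right|}\,\omega(x)\,dx<\infty.\]
   Context: Convention $1/\infty:=0$ (and $\lambda^{1/0}:=0$ for $\lambda\in(0,1)$). $\frac1p$ satisfies the log-Hölder decay condition with $p_\infty$ if there is $c_2>0$ with $\big|\frac1{p(x)}-\frac1{p_\infty}\big|\le\frac{c_2}{\log(e+|x|)}$ for all $x\in\Omega$. A weight is a nonnegative locally integrable function $\omega$ on $\mathbb{R}^n$, $\omega(E):=\int_E\omega\,dx$. For $1<q<\infty$, $\omega\in A_q$ means $\sup_B|B|^{-q}\omega(B)\big(\int_B\omega^{-q'/q}dx\big)^{q-1}<\infty$ with $1/q+1/q'=1$, supremum over open balls; $\omega\in A_1$ means $M\omega\le C\omega$ a.e. ($M$ the Hardy–Littlewood maximal operator); $A_\infty:=\bigcup_{q\in[1,\infty)}A_q$. *)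

theory Defs
  imports "HOL-Analysis.Analysis"
begin

definition recip :: "ereal \<Rightarrow> real" where
  "recip p = (if p = \<infinity> then 0 else 1 / real_of_ereal p)"

definition lam_pow :: "real \<Rightarrow> real \<Rightarrow> real" where
  "lam_pow l t = (if t = 0 then 0 else l powr (1 / t))"

definition is_weight :: "('a::euclidean_space \<Rightarrow> real) \<Rightarrow> bool" where
  "is_weight w \<longleftrightarrow> (\<forall>x. 0 \<le> w x) \<and> w \<in> borel_measurable lebesgue \<and>
     (\<forall>K. compact K \<longrightarrow> set_integrable lebesgue K w)"

definition wmeas :: "('a::euclidean_space \<Rightarrow> real) \<Rightarrow> 'a set \<Rightarrow> real" where
  "wmeas w E = (LINT x:E|lebesgue. w x)"

definition maximal_op :: "('a::euclidean_space \<Rightarrow> real) \<Rightarrow> 'a \<Rightarrow> ennreal" where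
  "maximal_op f x = (SUP B \<in> {ball c r | c r. 0 < r \<and> x \<in> ball c r}.
       (\<integral>\<^sup>+ y. ennreal (indicator B y * \<bar>f y\<bar>) \<partial>lebesgue) / ennreal (measure lebesgue B))"

definition A1 :: "('a::euclidean_space \<Rightarrow> real) \<Rightarrow> bool" where
  "A1 w \<longleftrightarrow> is_weight w \<and>
     (\<exists>C::real. AE x in lebesgue. maximal_op w x \<le> ennreal C * ennreal (w x))"

text \<open>A_q class for 1 < q < \<infinity>: sup over open balls of
  |B|^(-q) w(B) (\<integral>_B w^(-q'/q))^(q-1) is finite, where q'/q = 1/(q-1).
  Negative powers of 0 are \<infinity>; balls with w(B)=0 contribute 0.\<close>
definition Aq :: "real \<Rightarrow> ('a::euclidean_space \<Rightarrow> real) \<Rightarrow> bool" where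
  "Aq q w \<longleftrightarrow> 1 < q \<and> is_weight w \<and>
     (\<exists>C::real. \<forall>c r. 0 < r \<longrightarrow>
        (let B = ball c r;
             I = (\<integral>\<^sup>+ y. (indicator B y *
                    (if w y = 0 then \<infinity> else ennreal (w y powr (- 1 / (q - 1))))) \<partial>lebesgue)
         in 0 < wmeas w B \<longrightarrow>
            I < \<infinity> \<and>
            measure lebesgue B powr (- q) * wmeas w B * enn2real I powr (q - 1) \<le> C))"

definition A_infty :: "('a::euclidean_space \<Rightarrow> real) \<Rightarrow> bool" where
  "A_infty w \<longleftrightarrow> A1 w \<or> (\<exists>q. 1 < q \<and> Aq q w)"

definition log_hoelder_decay :: "'a::euclidean_space set \<Rightarrow> ('a \<Rightarrow> ereal) \<Rightarrow> ereal \<Rightarrow> bool" where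
  "log_hoelder_decay \<Omega> p pinf \<longleftrightarrow>
     (\<exists>c2>0. \<forall>x\<in>\<Omega>. \<bar>recip (p x) - recip pinf\<bar> \<le> c2 / ln (exp 1 + norm x))"

end

theory Submission
  imports Defs
begin


lemma wmeas_G:
  fixes w :: "'a::euclidean_space \<Rightarrow> real"
  assumes "is_weight w"
  shows "(\<integral>\<^sup>+x. ennreal (indicator (ball 0 R) x * w x) \<partial>lebesgue) = ennreal (wmeas w (ball 0 R))"
    and "0 \<le> wmeas w (ball 0 R)"
proof -
  have "set_integrable lebesgue (cball 0 R) w" using assms compact_cball unfolding is_weight_def by blast
  then have si: "set_integrable lebesgue (ball 0 R) w"
    by (rule set_integrable_subset) auto
  then have int: "integrable lebesgue (\<lambda>x. indicator (ball 0 R) x * w x)"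
    unfolding set_integrable_def by simp
  have nn: "\<And>x. 0 \<le> indicator (ball 0 R) x * w x" using assms unfolding is_weight_def by simp
  show "(\<integral>\<^sup>+x. ennreal (indicator (ball 0 R) x * w x) \<partial>lebesgue) = ennreal (wmeas w (ball 0 R))"
    unfolding wmeas_def set_lebesgue_integral_def
    using nn_integral_eq_integral[OF int] nn by simp
  show "0 \<le> wmeas w (ball 0 R)"
    unfolding wmeas_def set_lebesgue_integral_def using nn by simp
qed

lemma meas_ball:
  assumes "0 \<le> R"
  shows "measure lebesgue (ball (0::'a::euclidean_space) R) = R ^ DIM('a) * measure lebesgue (ball (0::'a) 1)"
  using emeasure_lebesgue_ball_conv_unit_ball[OF assms, of "0::'a"] assms
  by (simp add: measure_def enn2real_mult)

lemma meas_ball_pos: "0 < measure lebesgue (ball (0::'a::euclidean_space) 1)"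
proof -
  have "emeasure lebesgue (ball (0::'a) 1) = emeasure lborel (ball (0::'a) 1)"
    by (simp add: emeasure_completion)
  then show ?thesis using emeasure_ball[of 1 "0::'a"] 
    by (simp add: measure_def)
qed



lemma growth_A1:
  fixes w :: "'a::euclidean_space \<Rightarrow> real"
  assumes "A1 w"
  shows "\<exists>A\<ge>0. \<forall>R\<ge>1. wmeas w (ball (0::'a) R) \<le> A * R ^ DIM('a)"
proof -
  have wt: "is_weight w" using assms unfolding A1_def by blast
  then have [measurable]: "w \<in> borel_measurable lebesgue" and wnn: "\<And>x. 0 \<le> w x"
    unfolding is_weight_def by auto
  have [measurable]: "\<And>R. ball (0::'a) R \<in> sets lebesgue" by simp
  obtain C :: real where C: "AE x in lebesgue. maximal_op w x \<le> ennreal C * ennreal (w x)"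
    using assms unfolding A1_def by blast
  define C' where "C' = max C 0"
  have C'C: "ennreal C = ennreal C'" unfolding C'_def by (cases "C \<le> 0") (auto simp: ennreal_neg)
  define \<mu>1 where "\<mu>1 = measure lebesgue (ball (0::'a) 1)"
  define g1 where "g1 = wmeas w (ball (0::'a) 1)"
  have \<mu>1: "0 < \<mu>1" unfolding \<mu>1_def by (rule meas_ball_pos)
  have e1: "emeasure lebesgue (ball (0::'a) 1) = ennreal \<mu>1"
    unfolding \<mu>1_def by (rule emeasure_eq_ennreal_measure) (simp add: emeasure_completion emeasure_ball)
  have g1: "0 \<le> g1" unfolding g1_def using wmeas_G(2)[OF wt] .
  show ?thesis
  proof (intro exI[of _ "C' * g1"] conjI allI impI)
    show "0 \<le> C' * g1" unfolding C'_def using g1 by simp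
    fix R :: real assume R: "1 \<le> R"
    define gR where "gR = wmeas w (ball (0::'a) R)"
    define \<mu>R where "\<mu>R = measure lebesgue (ball (0::'a) R)"
    have \<mu>R: "\<mu>R = R ^ DIM('a) * \<mu>1" unfolding \<mu>R_def \<mu>1_def using meas_ball[of R] R by simp
    have \<mu>Rpos: "0 < \<mu>R" unfolding \<mu>R using \<mu>1 R by simp
    have gR: "0 \<le> gR" unfolding gR_def using wmeas_G(2)[OF wt] .
    have GR: "(\<integral>\<^sup>+ y. ennreal (indicator (ball (0::'a) R) y * \<bar>w y\<bar>) \<partial>lebesgue) = ennreal gR"
      unfolding gR_def using wmeas_G(1)[OF wt, of R] wnn by simp
    have pt: "ennreal (gR / \<mu>R) \<le> maximal_op w x" if x: "x \<in> ball (0::'a) 1" for x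
    proof -
      have "ball 0 R \<in> {ball c r | c r. 0 < r \<and> x \<in> ball c r}" using x R by (intro CollectI exI[of _ 0] exI[of _ R]) (auto simp: dist_norm)
      then have "(\<integral>\<^sup>+ y. ennreal (indicator (ball (0::'a) R) y * \<bar>w y\<bar>) \<partial>lebesgue) / ennreal (measure lebesgue (ball (0::'a) R)) \<le> maximal_op w x"
        unfolding maximal_op_def
        by (rule SUP_upper[where f="\<lambda>B. (\<integral>\<^sup>+ y. ennreal (indicator B y * \<bar>w y\<bar>) \<partial>lebesgue) / ennreal (measure lebesgue B)"])
      then show ?thesis using GR divide_ennreal[OF gR \<mu>Rpos] unfolding \<mu>R_def by simp
    qed
    have "(\<integral>\<^sup>+ x. ennreal (gR / \<mu>R) * indicator (ball (0::'a) 1) x \<partial>lebesgue)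
        \<le> (\<integral>\<^sup>+ x. ennreal C' * ennreal (indicator (ball (0::'a) 1) x * w x) \<partial>lebesgue)"
    proof (rule nn_integral_mono_AE)
      show "AE x in lebesgue. ennreal (gR / \<mu>R) * indicator (ball (0::'a) 1) x \<le> ennreal C' * ennreal (indicator (ball (0::'a) 1) x * w x)"
        using C
      proof eventually_elim
        case (elim x)
        show ?case
        proof (cases "x \<in> ball 0 1")
          case True
          then show ?thesis using pt[OF True] elim C'C by simp
        qed simp
      qed
    qed
    also have "\<dots> = ennreal C' * ennreal g1"
      by (subst nn_integral_cmult) (measurable, simp add: g1_def wmeas_G(1)[OF wt])
    finally have "ennreal (gR / \<mu>R) * ennreal \<mu>1 \<le> ennreal C' * ennreal g1"
      by (simp add: nn_integral_cmult_indicator e1)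
    moreover have "ennreal (gR / \<mu>R) * ennreal \<mu>1 = ennreal (gR / \<mu>R * \<mu>1)"
      using gR \<mu>Rpos \<mu>1 by (intro ennreal_mult[symmetric]) auto
    moreover have "ennreal C' * ennreal g1 = ennreal (C' * g1)"
      using g1 by (intro ennreal_mult[symmetric]) (auto simp: C'_def)
    ultimately have "ennreal (gR / \<mu>R * \<mu>1) \<le> ennreal (C' * g1)"
      by simp
    then have "gR / \<mu>R * \<mu>1 \<le> C' * g1"
      using g1 by (simp add: C'_def ennreal_le_iff)
    then show "wmeas w (ball (0::'a) R) \<le> C' * g1 * R ^ DIM('a)"
      unfolding gR_def[symmetric] \<mu>R using \<mu>1 R by (simp add: field_simps)
  qed
qed



lemma real_aux:
  fixes gR iR i1 mR C q :: real
  assumes "0 < mR" "0 \<le> gR" "i1 \<le> iR" "0 < i1" "1 < q"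
    and "mR powr (- q) * gR * iR powr (q - 1) \<le> C"
  shows "gR \<le> C * mR powr q / i1 powr (q - 1)"
proof -
  have "gR * iR powr (q - 1) = mR powr q * (mR powr (- q) * gR * iR powr (q - 1))"
    using assms(1) by (simp add: powr_minus field_simps)
  also have "\<dots> \<le> mR powr q * C" using assms by (intro mult_left_mono) auto
  finally have 1: "gR * iR powr (q - 1) \<le> C * mR powr q" by (simp add: mult.commute)
  have "gR * i1 powr (q - 1) \<le> gR * iR powr (q - 1)"
    using assms by (intro mult_left_mono powr_mono2) auto
  with 1 have "gR * i1 powr (q - 1) \<le> C * mR powr q" by linarith
  then show ?thesis using assms(4) by (simp add: field_simps)
qed

lemma growth_Aq:
  fixes w :: "'a::euclidean_space \<Rightarrow> real" and q :: real
  assumes "Aq q w"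
  shows "\<exists>A\<ge>0. \<forall>R\<ge>1. wmeas w (ball 0 R) \<le> A * R powr (real DIM('a) * q)"
proof -
  have q: "1 < q" and wt: "is_weight w" using assms unfolding Aq_def by auto
  then have [measurable]: "w \<in> borel_measurable lebesgue" and wnn: "\<And>x. 0 \<le> w x"
    unfolding is_weight_def by auto
  have [measurable]: "\<And>R. ball (0::'a) R \<in> sets lebesgue" by simp
  obtain C :: real where C: "\<forall>c r. 0 < r \<longrightarrow>
        (let B = ball c r;
             I = (\<integral>\<^sup>+ y. (indicator B y *
                    (if w y = 0 then \<infinity> else ennreal (w y powr (- 1 / (q - 1))))) \<partial>lebesgue)
         in 0 < wmeas w B \<longrightarrow>
            I < \<infinity> \<and>
            measure lebesgue B powr (- q) * wmeas w B * enn2real I powr (q - 1) \<le> C)"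
    using assms unfolding Aq_def by blast
  define \<sigma> where "\<sigma> y = (if w y = 0 then \<infinity> else ennreal (w y powr (- 1 / (q - 1))))" for y
  define I where "I R = (\<integral>\<^sup>+ y. (indicator (ball (0::'a) R) y * \<sigma> y) \<partial>lebesgue)" for R
  have \<sigma>pos: "0 < \<sigma> y" for y unfolding \<sigma>_def using wnn[of y] by auto
  have [measurable]: "\<sigma> \<in> borel_measurable lebesgue" unfolding \<sigma>_def by measurable
  define \<mu>1 where "\<mu>1 = measure lebesgue (ball (0::'a) 1)"
  have \<mu>1: "0 < \<mu>1" unfolding \<mu>1_def by (rule meas_ball_pos)
  have e1: "emeasure lebesgue (ball (0::'a) 1) = ennreal \<mu>1"
    unfolding \<mu>1_def by (rule emeasure_eq_ennreal_measure) (simp add: emeasure_completion emeasure_ball)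
  have I1pos: "0 < I 1"
  proof (rule ccontr)
    assume "\<not> 0 < I 1"
    then have "I 1 = 0" by simp
    then have "AE y in lebesgue. indicator (ball (0::'a) 1) y * \<sigma> y = 0"
      unfolding I_def by (subst (asm) nn_integral_0_iff_AE) auto
    then have "AE y in lebesgue. y \<notin> ball (0::'a) 1"
    proof eventually_elim
      case (elim y)
      then show ?case using \<sigma>pos[of y] by (auto split: split_indicator)
    qed
    then have "emeasure lebesgue (ball (0::'a) 1) = 0"
      by (subst (asm) AE_iff_measurable[where N="ball 0 1"]) auto
    then show False using e1 \<mu>1 by simp
  qed
  have Imono: "I 1 \<le> I R" if "1 \<le> R" for R
    unfolding I_def using that
    by (intro nn_integral_mono) (auto split: split_indicator)
  have main: "wmeas w (ball 0 R) \<le> C * (R ^ DIM('a) * \<mu>1) powr q / enn2real (I 1) powr (q - 1)"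
    if R: "1 \<le> R" and pos: "0 < wmeas w (ball 0 R)" for R
  proof -
    have "I R < \<infinity> \<and> measure lebesgue (ball (0::'a) R) powr (- q) * wmeas w (ball 0 R) * enn2real (I R) powr (q - 1) \<le> C"
      using C[rule_format, of R 0] R pos unfolding I_def \<sigma>_def Let_def by auto
    then have IR: "I R < \<infinity>" and ineq: "(R ^ DIM('a) * \<mu>1) powr (- q) * wmeas w (ball 0 R) * enn2real (I R) powr (q - 1) \<le> C"
      using meas_ball[of R, where 'a='a] R unfolding \<mu>1_def by auto
    have "I 1 < \<infinity>" using Imono[OF R] IR by auto
    then have "0 < enn2real (I 1)" using I1pos by (simp add: enn2real_positive_iff)
    moreover have "enn2real (I 1) \<le> enn2real (I R)"
      using Imono[OF R] IR by (intro enn2real_mono) auto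
    ultimately show ?thesis
      using \<mu>1 R q pos by (intro real_aux[OF _ _ _ _ _ ineq]) auto
  qed
  show ?thesis
  proof (cases "I 1 < \<infinity>")
    case False
    have "wmeas w (ball 0 R) \<le> 0" if "1 \<le> R" for R
    proof (rule ccontr)
      assume "\<not> ?thesis"
      then have "I R < \<infinity>"
        using C[rule_format, of R 0] that unfolding I_def \<sigma>_def Let_def by auto
      then show False using Imono[OF that] False by auto
    qed
    then show ?thesis by (intro exI[of _ 0]) auto
  next
    case True
    define A where "A = max C 0 * \<mu>1 powr q / enn2real (I 1) powr (q - 1)"
    show ?thesis
    proof (intro exI[of _ A] conjI allI impI)
      show "0 \<le> A" unfolding A_def by auto
      fix R :: real assume R: "1 \<le> R"
      show "wmeas w (ball 0 R) \<le> A * R powr (real DIM('a) * q)"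
      proof (cases "0 < wmeas w (ball 0 R)")
        case False
        have "0 \<le> A" unfolding A_def by auto
        then have "0 \<le> A * R powr (real DIM('a) * q)" by simp
        then show ?thesis using False by linarith
      next
        case True
        have "(R ^ DIM('a) * \<mu>1) powr q = R powr (real DIM('a) * q) * \<mu>1 powr q"
          using R \<mu>1 by (simp add: powr_mult powr_realpow[symmetric] powr_powr)
        then have "wmeas w (ball 0 R) \<le> C * (R powr (real DIM('a) * q) * \<mu>1 powr q) / enn2real (I 1) powr (q - 1)"
          using main[OF R True] by simp
        also have "\<dots> \<le> A * R powr (real DIM('a) * q)"
          unfolding A_def by (simp add: field_simps divide_right_mono mult_right_mono)
        finally show ?thesis .
      qed
    qed
  qed
qed



lemma dyadic:
  fixes x :: "'a::real_normed_vector" and N :: real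
  assumes N: "0 \<le> N"
  shows "\<exists>k. norm x < 2 ^ k \<and> (exp 1 + norm x) powr (- N) \<le> 2 powr N * (2 powr (- N)) ^ k"
proof -
  obtain k0 where "norm x < 2 ^ k0" using real_arch_pow[of 2 "norm x"] by auto
  define k where "k = (LEAST k. norm x < (2::real) ^ k)"
  have k: "norm x < 2 ^ k" unfolding k_def by (rule LeastI) fact
  have pos: "0 < exp 1 + norm x" by (simp add: add_pos_nonneg)
  show ?thesis
  proof (intro exI conjI, fact k)
    show "(exp 1 + norm x) powr (- N) \<le> 2 powr N * (2 powr (- N)) ^ k"
    proof (cases k)
      case 0
      have "1 \<le> exp 1 + norm x" using exp_ge_add_one_self[of 1] by (simp add: add_increasing2)
      then have "1 \<le> (exp 1 + norm x) powr N" using N by (rule ge_one_powr_ge_zero)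
      then have "(exp 1 + norm x) powr (- N) \<le> 1" using pos by (simp add: powr_minus divide_simps)
      moreover have "1 \<le> 2 powr N" using N by (intro ge_one_powr_ge_zero) auto
      ultimately show ?thesis using 0 by simp
    next
      case (Suc j)
      have "\<not> norm x < 2 ^ j" unfolding k_def using Suc k_def not_less_Least[of j "\<lambda>k. norm x < (2::real) ^ k"] by simp
      then have "2 ^ j \<le> exp 1 + norm x" by (simp add: add_increasing)
      then have "(exp 1 + norm x) powr (- N) \<le> (2 ^ j) powr (- N)"
        using N by (intro powr_mono2') auto
      also have "\<dots> = (2 powr (- N)) ^ j" by (simp add: powr_realpow[symmetric] powr_powr mult.commute powr_power)
      also have "\<dots> = 2 powr N * (2 powr (- N)) ^ k"
        using Suc by (simp add: powr_minus)
      finally show ?thesis .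
    qed
  qed
qed



lemma growth:
  fixes w :: "'a::euclidean_space \<Rightarrow> real"
  assumes "A_infty w"
  shows "\<exists>A\<ge>0. \<exists>s\<ge>0. \<forall>R\<ge>1. wmeas w (ball 0 R) \<le> A * R powr s"
  using assms unfolding A_infty_def
proof
  assume "A1 w"
  then obtain A where A: "A \<ge> 0" "\<forall>R\<ge>1. wmeas w (ball 0 R) \<le> A * R ^ DIM('a)"
    using growth_A1 by blast
  show ?thesis
    by (rule exI[of _ A], rule conjI[OF A(1)], rule exI[of _ "real DIM('a)"])
       (use A(2) in \<open>auto simp: powr_realpow\<close>)
next
  assume "\<exists>q>1. Aq q w"
  then obtain q where q: "1 < q" "Aq q w" by blast
  obtain A where A: "A \<ge> 0" "\<forall>R\<ge>1. wmeas w (ball 0 R) \<le> A * R powr (real DIM('a) * q)"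
    using growth_Aq[OF q(2)] by blast
  have "0 \<le> real DIM('a) * q" using q(1) by simp
  then show ?thesis using A by blast
qed

theorem lemma5p6:
  fixes \<Omega> :: "'a::euclidean_space set"
    and w :: "'a \<Rightarrow> real"
    and p :: "'a \<Rightarrow> ereal"
    and pinf :: ereal
  assumes "open \<Omega>"
    and "A_infty w"
    and "p \<in> borel_measurable (restrict_space lebesgue \<Omega>)"
    and "\<forall>x\<in>\<Omega>. 1 \<le> p x"
    and "1 \<le> pinf"
    and "log_hoelder_decay \<Omega> p pinf"
  shows "\<exists>l. 0 < l \<and> l < 1 \<and>
     (\<integral>\<^sup>+ x. ennreal (indicator \<Omega> x * lam_pow l \<bar>recip (p x) - recip pinf\<bar> * w x) \<partial>lebesgue) < \<infinity>"
proof -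
  have wt: "is_weight w" using assms(2) unfolding A_infty_def A1_def Aq_def by auto
  then have [measurable]: "w \<in> borel_measurable lebesgue" and wnn: "\<And>x. 0 \<le> w x"
    unfolding is_weight_def by auto
  have [measurable]: "\<And>R. ball (0::'a) R \<in> sets lebesgue" by simp
  obtain c2 where c2: "c2 > 0" "\<forall>x\<in>\<Omega>. \<bar>recip (p x) - recip pinf\<bar> \<le> c2 / ln (exp 1 + norm x)"
    using assms(6) unfolding log_hoelder_decay_def by blast
  obtain A s where As: "A \<ge> 0" "s \<ge> 0" "\<forall>R\<ge>1. wmeas w (ball 0 R) \<le> A * R powr s"
    using growth[OF assms(2)] by blast
  define N where "N = s + 1"
  have N: "0 \<le> N" unfolding N_def using As by simp
  define l where "l = exp (- c2 * N)"
  have l: "0 < l" "l < 1" unfolding l_def N_def using c2 As by auto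
  have lam: "lam_pow l \<bar>recip (p x) - recip pinf\<bar> \<le> (exp 1 + norm x) powr (- N)" if x: "x \<in> \<Omega>" for x
  proof (cases "recip (p x) - recip pinf = 0")
    case True
    then show ?thesis unfolding lam_pow_def by simp
  next
    case False
    define d where "d = \<bar>recip (p x) - recip pinf\<bar>"
    have d: "0 < d" unfolding d_def using False by simp
    have pos: "1 \<le> exp 1 + norm x" using exp_ge_add_one_self[of 1] by (simp add: add_increasing2)
    have "1 < exp (1::real)" by simp
    then have "1 < exp 1 + norm x" using norm_ge_zero[of x] by linarith
    then have lnpos: "0 < ln (exp 1 + norm x)" by simp
    have "d \<le> c2 / ln (exp 1 + norm x)" unfolding d_def using c2 x by auto
    then have "ln (exp 1 + norm x) \<le> c2 / d" using d lnpos by (simp add: field_simps)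
    then have "N * ln (exp 1 + norm x) \<le> N * (c2 / d)" using N by (rule mult_left_mono)
    moreover have "- c2 * N / d = - (N * (c2 / d))" by simp
    ultimately have "- c2 * N / d \<le> - N * ln (exp 1 + norm x)" by linarith
    then have le: "exp (- c2 * N / d) \<le> exp (- N * ln (exp 1 + norm x))" by (simp only: exp_le_cancel_iff)
    have e1: "l powr (1 / d) = exp (- c2 * N / d)" unfolding l_def powr_def by simp
    have e2: "exp (- N * ln (exp 1 + norm x)) = (exp 1 + norm x) powr (- N)"
      using pos unfolding powr_def by simp
    have h: "lam_pow l \<bar>recip (p x) - recip pinf\<bar> = l powr (1 / d)"
      unfolding lam_pow_def d_def using d d_def by simp
    show ?thesis using h e1 e2 le by linarith
  qed
  define c where "c k = 2 powr N * (2 powr (- N)) ^ k" for k :: nat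
  have cnn: "0 \<le> c k" for k unfolding c_def by simp
  have pt: "ennreal (indicator \<Omega> x * lam_pow l \<bar>recip (p x) - recip pinf\<bar> * w x)
      \<le> (\<Sum>k. ennreal (c k) * ennreal (indicator (ball 0 (2 ^ k)) x * w x))" for x
  proof -
    obtain k where k: "norm x < 2 ^ k" "(exp 1 + norm x) powr (- N) \<le> c k"
      using dyadic[OF N, of x] unfolding c_def by blast
    have "indicator \<Omega> x * lam_pow l \<bar>recip (p x) - recip pinf\<bar> * w x \<le> c k * (indicator (ball 0 (2 ^ k)) x * w x)"
    proof (cases "x \<in> \<Omega>")
      case True
      have "lam_pow l \<bar>recip (p x) - recip pinf\<bar> * w x \<le> c k * w x"
        using lam[OF True] k(2) wnn[of x] by (intro mult_right_mono) auto
      then show ?thesis using True k(1) by simp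
    next
      case False
      then show ?thesis using cnn[of k] wnn[of x] by (simp split: split_indicator)
    qed
    then have "ennreal (indicator \<Omega> x * lam_pow l \<bar>recip (p x) - recip pinf\<bar> * w x)
       \<le> ennreal (c k) * ennreal (indicator (ball 0 (2 ^ k)) x * w x)"
      using cnn[of k] wnn[of x] by (simp add: ennreal_mult[symmetric] ennreal_leI)
    also have "\<dots> \<le> (\<Sum>k. ennreal (c k) * ennreal (indicator (ball 0 (2 ^ k)) x * w x))"
      using sum_le_suminf[OF summableI, of "{k}" "\<lambda>k. ennreal (c k) * ennreal (indicator (ball 0 (2 ^ k)) x * w x)"] by simp
    finally show ?thesis .
  qed
  have "(\<integral>\<^sup>+ x. ennreal (indicator \<Omega> x * lam_pow l \<bar>recip (p x) - recip pinf\<bar> * w x) \<partial>lebesgue)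
     \<le> (\<integral>\<^sup>+ x. (\<Sum>k. ennreal (c k) * ennreal (indicator (ball (0::'a) (2 ^ k)) x * w x)) \<partial>lebesgue)"
    by (intro nn_integral_mono pt)
  also have "\<dots> = (\<Sum>k. ennreal (c k) * ennreal (wmeas w (ball (0::'a) (2 ^ k))))"
    by (subst nn_integral_suminf) (measurable, simp add: nn_integral_cmult wmeas_G(1)[OF wt])
  also have "\<dots> \<le> (\<Sum>k. ennreal (2 powr N * A * (1 / 2) ^ k))"
  proof (intro suminf_le allI)
    fix k :: nat
    have "wmeas w (ball 0 (2 ^ k)) \<le> A * (2 ^ k) powr s" using As(3) by simp
    then have "c k * wmeas w (ball (0::'a) (2 ^ k)) \<le> c k * (A * (2 ^ k) powr s)"
      using cnn by (intro mult_left_mono) auto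
    also have "\<dots> = 2 powr N * A * (1 / 2) ^ k"
    proof -
      have "(2 powr (- N)) ^ k * (2 ^ k) powr s = (2 powr (- N) * 2 powr s) ^ k"
        by (simp add: powr_realpow[symmetric] powr_powr power_mult_distrib powr_power mult.commute)
      also have "2 powr (- N) * 2 powr s = (1 / 2 :: real)"
        unfolding N_def by (simp add: powr_add[symmetric] powr_minus)
      finally show ?thesis unfolding c_def by (simp add: algebra_simps)
    qed
    finally show "ennreal (c k) * ennreal (wmeas w (ball (0::'a) (2 ^ k))) \<le> ennreal (2 powr N * A * (1 / 2) ^ k)"
      using cnn[of k] wmeas_G(2)[OF wt] by (simp add: ennreal_mult[symmetric] ennreal_leI)
  qed auto
  also have "\<dots> < \<infinity>"
  proof -
    have "summable (\<lambda>k. 2 powr N * A * (1 / 2 :: real) ^ k)"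
      by (intro summable_mult summable_geometric) simp
    then have "(\<Sum>k. ennreal (2 powr N * A * (1 / 2) ^ k)) \<noteq> top"
      by (rule ennreal_suminf_neq_top) (use As(1) in simp)
    then show ?thesis by (simp add: less_top)
  qed
  finally show ?thesis using l by blast
qed


end
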